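(* Every sequential Thiele rule whose scoring function is not of the form $s(x)=\alpha x$ (i.e., every sequential Thiele rule other than approval voting), sequential Phragmén, and the method of equal shares fail participation: for each of these rules $f$ there exist a finite candidate set $C$, a committee size $k$, a profile $A$ on $C$ with $|N_A|\ge 2$ and a voter $i\in N_A$ with $f(A_{-i},k)\succ_i f(A,k)$.
   Context: Candidates form a finite set $C$, $|C|=m>1$. An approval profile $A$ has a nonempty finite voter set $N_A$, each $i\in N_A$ having a nonempty ballot $A_i\subseteq C$; $N_A(c)=\{i\in N_A:c\in A_i\}$, $n=|N_A|$, $A_{-i}$ is $A$ with voter $i$ removed. Committees of size $k\in\{1,\dots,m-1\}$ are $k$-subsets of $C$. Preferences: $W\succsim_i W'$ iff $|W\cap A_i|\ge|W'\cap A_i|$, $W\succ_i W'$ iff $>$. Kelly's extension: $X\succsim_i Y$ iff $W\succsim_i W'$ for all $W\in X,W'\in Y$; $X\succ_i Y$ iff $X\succsim_i Y$ and $W\succ_i W'$ for some $W\in X,W'\in Y$. All rules below build a committee by sequentially adding candidates and return every committee obtainable under some tie-breaking (every choice among tied candidates). Sequential Thiele rule: given $s:\mathbb N_0\to\mathbb Q$ with $s(0)=0$, $s(1)>0$, $s$ nondecreasing and concave ($s(x+1)-s(x)\ge s(x+2)-s(x+1)$), with $\hat s(A,W)=\sum_{i\in N_A}s(|A_i\cap W|)$; having chosen $c_1,\dots,c_\ell$, the next candidate is any $x\in C\setminus\{c_1,\dots,c_\ell\}$ maximizing $\hat s(A,\{c_1,\dots,c_\ell,x\})$. Sequential Phragmén: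 set $y_0(i)=0$ for all voters. In round $r$, with $c_1,\dots,c_{r-1}$ chosen, each unchosen $c$ has load $\ell_r(c)=\bigl(1+\sum_{i\in N_A(c)}y_{r-1}(i)\bigr)/|N_A(c)|$ ($+\infty$ if $N_A(c)=\emptyset$); any $c_r$ minimizing $\ell_r$ is chosen, and $y_r(i)=\ell_r(c_r)$ for $i\in N_A(c_r)$, $y_r(i)=y_{r-1}(i)$ otherwise. Method of equal shares (MES): each voter starts with budget $x_0(i)=k/n$; every candidate costs 1. Phase 1: with budgets $x_r$ after buying $r$ candidates, let $C_r$ be the unchosen candidates $c$ with $\sum_{i\in N_A(c)}x_r(i)\ge1$; if $C_r\neq\emptyset$, buy any $c\in C_r$ minimizing $\rho(c)$, where $\sum_{i\in N_A(c)}\min(\rho(c),x_r(i))=1$, and set $x_{r+1}(i)=x_r(i)-\min(\rho(c),x_r(i))$ for $i\in N_A(c)$, $x_{r+1}(i)=x_r(i)$ otherwise; stop when $C_r=\emptyset$. Phase 2 (if fewer than $k$ bought): starting from the remaining budgets, all voters' budgets increase continuously at unit rate; as soon as the supporters $N_A(c)$ of some unchosen $c$ have total budget 1, such a $c$ (any, in case of ties) is bought and the budgets of its supporters are reset to 0; continue until $k$ candidates are bought. *)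

theory Defs
  imports Complex_Main
begin

text \<open>A profile on candidate set C is given by a voter set N and ballots A.
  Removing voter i gives the profile (N - {i}, A).\<close>

definition supporters :: "'v set \<Rightarrow> ('v \<Rightarrow> 'c set) \<Rightarrow> 'c \<Rightarrow> 'v set" where
  "supporters N A c = {i \<in> N. c \<in> A i}"

definition is_profile :: "'c set \<Rightarrow> 'v set \<Rightarrow> ('v \<Rightarrow> 'c set) \<Rightarrow> bool" where
  "is_profile C N A \<longleftrightarrow> finite N \<and> N \<noteq> {} \<and> (\<forall>i\<in>N. A i \<noteq> {} \<and> A i \<subseteq> C)"

definition kelly_strict :: "'c set \<Rightarrow> 'c set set \<Rightarrow> 'c set set \<Rightarrow> bool" where
  "kelly_strict B X Y \<longleftrightarrow>
     (\<forall>W\<in>X. \<forall>W'\<in>Y. card (W' \<inter> B) \<le> card (W \<inter> B)) \<and>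
     (\<exists>W\<in>X. \<exists>W'\<in>Y. card (W' \<inter> B) < card (W \<inter> B))"

definition thiele_score :: "(nat \<Rightarrow> rat) \<Rightarrow> 'v set \<Rightarrow> ('v \<Rightarrow> 'c set) \<Rightarrow> 'c set \<Rightarrow> rat" where
  "thiele_score s N A W = (\<Sum>i\<in>N. s (card (A i \<inter> W)))"

inductive thiele_partial :: "(nat \<Rightarrow> rat) \<Rightarrow> 'c set \<Rightarrow> 'v set \<Rightarrow> ('v \<Rightarrow> 'c set) \<Rightarrow> 'c set \<Rightarrow> bool"
  for s C N A where
  thiele_init: "thiele_partial s C N A {}"
| thiele_step: "thiele_partial s C N A W \<Longrightarrow> x \<in> C - W \<Longrightarrow>
    (\<forall>y\<in>C - W. thiele_score s N A (insert y W) \<le> thiele_score s N A (insert x W)) \<Longrightarrow>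
    thiele_partial s C N A (insert x W)"

definition seq_thiele :: "(nat \<Rightarrow> rat) \<Rightarrow> 'c set \<Rightarrow> 'v set \<Rightarrow> ('v \<Rightarrow> 'c set) \<Rightarrow> nat \<Rightarrow> 'c set set" where
  "seq_thiele s C N A k = {W. thiele_partial s C N A W \<and> card W = k}"

definition phrag_load :: "'v set \<Rightarrow> ('v \<Rightarrow> 'c set) \<Rightarrow> ('v \<Rightarrow> real) \<Rightarrow> 'c \<Rightarrow> real" where
  "phrag_load N A y c =
     (1 + (\<Sum>i\<in>supporters N A c. y i)) / real (card (supporters N A c))"

text \<open>Candidates without supporters have load +infinity: they are never strictly
  preferred and can only be chosen when every unchosen candidate lacks supporters.\<close>

inductive phrag_partial :: "'c set \<Rightarrow> 'v set \<Rightarrow> ('v \<Rightarrow> 'c set) \<Rightarrow> 'c set \<Rightarrow> ('v \<Rightarrow> real) \<Rightarrow> bool"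
  for C N A where
  phrag_init: "phrag_partial C N A {} (\<lambda>_. 0)"
| phrag_step: "phrag_partial C N A W y \<Longrightarrow> x \<in> C - W \<Longrightarrow>
    (\<forall>c\<in>C - W. supporters N A c \<noteq> {} \<longrightarrow>
        supporters N A x \<noteq> {} \<and> phrag_load N A y x \<le> phrag_load N A y c) \<Longrightarrow>
    phrag_partial C N A (insert x W)
      (\<lambda>i. if i \<in> supporters N A x then phrag_load N A y x else y i)"

definition seq_phragmen :: "'c set \<Rightarrow> 'v set \<Rightarrow> ('v \<Rightarrow> 'c set) \<Rightarrow> nat \<Rightarrow> 'c set set" where
  "seq_phragmen C N A k = {W. \<exists>y. phrag_partial C N A W y \<and> card W = k}"

definition mes_affordable :: "'v set \<Rightarrow> ('v \<Rightarrow> 'c set) \<Rightarrow> ('v \<Rightarrow> real) \<Rightarrow> 'c \<Rightarrow> bool" where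
  "mes_affordable N A x c \<longleftrightarrow> 1 \<le> (\<Sum>i\<in>supporters N A c. x i)"

definition mes_rho :: "('v \<Rightarrow> real) \<Rightarrow> 'v set \<Rightarrow> real" where
  "mes_rho x S = Inf {r. 0 \<le> r \<and> (\<Sum>i\<in>S. min r (x i)) = 1}"

text \<open>Phase 2: time until the supporters of c (budgets growing at unit rate) hold total budget 1.\<close>

definition mes_time :: "'v set \<Rightarrow> ('v \<Rightarrow> 'c set) \<Rightarrow> ('v \<Rightarrow> real) \<Rightarrow> 'c \<Rightarrow> real" where
  "mes_time N A x c =
     (1 - (\<Sum>i\<in>supporters N A c. x i)) / real (card (supporters N A c))"

text \<open>States: chosen set, budgets, and a flag telling whether phase 2 has started.\<close>

inductive mes_partial :: "'c set \<Rightarrow> 'v set \<Rightarrow> ('v \<Rightarrow> 'c set) \<Rightarrow> nat \<Rightarrow>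
    'c set \<Rightarrow> ('v \<Rightarrow> real) \<Rightarrow> bool \<Rightarrow> bool"
  for C N A k where
  mes_init: "mes_partial C N A k {} (\<lambda>_. real k / real (card N)) False"
| mes_phase1: "mes_partial C N A k W x False \<Longrightarrow> c \<in> C - W \<Longrightarrow>
    mes_affordable N A x c \<Longrightarrow>
    (\<forall>d\<in>C - W. mes_affordable N A x d \<longrightarrow>
        mes_rho x (supporters N A c) \<le> mes_rho x (supporters N A d)) \<Longrightarrow>
    mes_partial C N A k (insert c W)
      (\<lambda>i. if i \<in> supporters N A c then x i - min (mes_rho x (supporters N A c)) (x i) else x i)
      False"
| mes_switch: "mes_partial C N A k W x False \<Longrightarrow>
    (\<forall>d\<in>C - W. \<not> mes_affordable N A x d) \<Longrightarrow>
    mes_partial C N A k W x True"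
| mes_phase2: "mes_partial C N A k W x True \<Longrightarrow> c \<in> C - W \<Longrightarrow>
    supporters N A c \<noteq> {} \<Longrightarrow>
    (\<forall>d\<in>C - W. supporters N A d \<noteq> {} \<longrightarrow> mes_time N A x c \<le> mes_time N A x d) \<Longrightarrow>
    mes_partial C N A k (insert c W)
      (\<lambda>i. if i \<in> supporters N A c then 0 else x i + mes_time N A x c)
      True"

definition equal_shares :: "'c set \<Rightarrow> 'v set \<Rightarrow> ('v \<Rightarrow> 'c set) \<Rightarrow> nat \<Rightarrow> 'c set set" where
  "equal_shares C N A k = {W. \<exists>x b. mes_partial C N A k W x b \<and> card W = k}"

definition fails_participation ::
    "('c set \<Rightarrow> 'v set \<Rightarrow> ('v \<Rightarrow> 'c set) \<Rightarrow> nat \<Rightarrow> 'c set set) \<Rightarrow> bool" where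
  "fails_participation f \<longleftrightarrow>
     (\<exists>C N A k i. finite C \<and> 1 < card C \<and> 1 \<le> k \<and> k < card C \<and>
        is_profile C N A \<and> 2 \<le> card N \<and> i \<in> N \<and>
        kelly_strict (A i) (f C (N - {i}) A k) (f C N A k))"

end

theory Submission
  imports Defs
begin


lemma diff_le0:
  fixes s :: "nat \<Rightarrow> rat"
  assumes cc: "\<forall>x. s (x + 2) - s (x + 1) \<le> s (x + 1) - s x"
  shows "s (j+1) - s j \<le> s 1 - s 0"
proof (induction j)
  case 0 then show ?case by simp
next
  case (Suc j)
  have "s (j + 2) - s (j + 1) \<le> s (j + 1) - s j" using cc by blast
  then show ?case using Suc by (simp add: numeral_2_eq_2)
qed

lemma thiele_param:
  fixes s :: "nat \<Rightarrow> rat"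
  assumes s0: "s 0 = 0" and s1: "0 < s 1" and mo: "mono s"
    and cc: "\<forall>x. s (x + 2) - s (x + 1) \<le> s (x + 1) - s x"
    and nl: "\<not> (\<exists>\<alpha>. \<forall>x. s x = \<alpha> * of_nat x)"
  obtains p b where "\<forall>j\<le>p+1. s j = of_nat j * s 1" "s (p+2) = s (p+1) + b" "0 \<le> b" "b < s 1"
proof -
  have ex: "\<exists>j. s (j+1) - s j < s 1"
  proof (rule ccontr)
    assume "\<not> ?thesis"
    then have d: "\<forall>j. s (j+1) - s j = s 1"
    proof (intro allI)
      fix j
      assume "\<not> (\<exists>j. s (j + 1) - s j < s 1)"
      then have "s 1 \<le> s (j+1) - s j" by (simp add: not_less)
      moreover have "s (j+1) - s j \<le> s 1" using diff_le0[OF cc, of j] s0 by simp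
      ultimately show "s (j+1) - s j = s 1" by simp
    qed
    have "\<forall>x. s x = s 1 * of_nat x"
    proof
      fix x show "s x = s 1 * of_nat x"
      proof (induction x)
        case 0 then show ?case using s0 by simp
      next
        case (Suc x)
        have "s (x+1) = s x + s 1" using d[rule_format, of x] by simp
        then show ?case using Suc by (simp add: algebra_simps)
      qed
    qed
    then show False using nl by blast
  qed
  define t where "t = (LEAST j. s (j+1) - s j < s 1)"
  have tl: "s (t+1) - s t < s 1" unfolding t_def by (rule LeastI_ex[OF ex])
  have below: "\<forall>j<t. s (j+1) - s j = s 1"
  proof (intro allI impI)
    fix j assume "j < t"
    then have "\<not> s (j+1) - s j < s 1" unfolding t_def by (rule not_less_Least)
    then show "s (j+1) - s j = s 1" using diff_le0[OF cc, of j] s0 by simp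
  qed
  have t1: "t \<ge> 1" using tl s0 by (cases t) auto
  have lin: "\<forall>j\<le>t. s j = of_nat j * s 1"
  proof (intro allI impI)
    fix j assume "j \<le> t" then show "s j = of_nat j * s 1"
    proof (induction j)
      case 0 then show ?case using s0 by simp
    next
      case (Suc j)
      then have jt: "j < t" by simp
      have "s (j+1) - s j = s 1" using below jt by blast
      then have e: "s (Suc j) = s j + s 1" by simp
      have "s j = of_nat j * s 1" using Suc.IH jt by simp
      then show ?case using e by (simp add: algebra_simps)
    qed
  qed
  define p where "p = t - 1"
  have tp: "t = p + 1" using t1 p_def by simp
  show ?thesis
  proof (rule that[of p "s (t+1) - s t"])
    show "\<forall>j\<le>p+1. s j = of_nat j * s 1" using lin unfolding tp by assumption
    show "s (p + 2) = s (p + 1) + (s (t + 1) - s t)" using tp by (simp add: numeral_2_eq_2)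
    show "0 \<le> s (t + 1) - s t" using mo by (simp add: mono_def)
    show "s (t + 1) - s t < s 1" by (rule tl)
  qed
qed


definition Bt :: "nat \<Rightarrow> nat \<Rightarrow> nat set" where
  "Bt g v = (if v < 1 then {0,1} else if v < 1+g then {0,2} else if v < 3*g+2 then {0}
     else if v < 6*g+2 then {1} else if v < 7*g+3 then {2,3} else if v < 8*g+4 then {2,4}
     else if v < 10*g+4 then {3} else {4})"

definition Pc :: "nat \<Rightarrow> nat set" where "Pc p = {5..<5+p}"
definition At :: "nat \<Rightarrow> nat \<Rightarrow> nat \<Rightarrow> nat set" where "At p g v = Pc p \<union> Bt g v"

lemma Bt_sub: "Bt g v \<subseteq> {0..<5}" by (auto simp: Bt_def)

lemma blk:
  fixes f :: "nat set \<Rightarrow> rat"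
  assumes "lo \<le> hi" "\<And>v. lo \<le> v \<Longrightarrow> v < hi \<Longrightarrow> Bt g v = B"
  shows "(\<Sum>v\<in>{lo..<hi}. f (Bt g v)) = of_nat (hi - lo) * f B"
proof -
  have "(\<Sum>v\<in>{lo..<hi}. f (Bt g v)) = (\<Sum>v\<in>{lo..<hi}. f B)" by (rule sum.cong) (auto simp: assms)
  then show ?thesis by simp
qed

lemma sumB1:
  fixes f :: "nat set \<Rightarrow> rat"
  shows "(\<Sum>v\<in>{1..<12*g+4}. f (Bt g v)) = of_nat g * f {0,2} + of_nat (2*g+1) * f {0}
     + of_nat (3*g) * f {1} + of_nat (g+1) * f {2,3} + of_nat (g+1) * f {2,4}
     + of_nat (2*g) * f {3} + of_nat (2*g) * f {4}"
proof -
  let ?h = "\<lambda>v. f (Bt g v)"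
  have e1: "sum ?h {1..<12*g+4} = sum ?h {1..<1+g} + sum ?h {1+g..<12*g+4}"
    by (rule sum.atLeastLessThan_concat[symmetric]) auto
  have e2: "sum ?h {1+g..<12*g+4} = sum ?h {1+g..<3*g+2} + sum ?h {3*g+2..<12*g+4}"
    by (rule sum.atLeastLessThan_concat[symmetric]) auto
  have e3: "sum ?h {3*g+2..<12*g+4} = sum ?h {3*g+2..<6*g+2} + sum ?h {6*g+2..<12*g+4}"
    by (rule sum.atLeastLessThan_concat[symmetric]) auto
  have e4: "sum ?h {6*g+2..<12*g+4} = sum ?h {6*g+2..<7*g+3} + sum ?h {7*g+3..<12*g+4}"
    by (rule sum.atLeastLessThan_concat[symmetric]) auto
  have e5: "sum ?h {7*g+3..<12*g+4} = sum ?h {7*g+3..<8*g+4} + sum ?h {8*g+4..<12*g+4}"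
    by (rule sum.atLeastLessThan_concat[symmetric]) auto
  have e6: "sum ?h {8*g+4..<12*g+4} = sum ?h {8*g+4..<10*g+4} + sum ?h {10*g+4..<12*g+4}"
    by (rule sum.atLeastLessThan_concat[symmetric]) auto
  have b1: "sum ?h {1..<1+g} = of_nat g * f {0,2}" by (subst blk[where B="{0,2}"]) (auto simp: Bt_def)
  have b2: "sum ?h {1+g..<3*g+2} = of_nat (2*g+1) * f {0}" by (subst blk[where B="{0}"]) (auto simp: Bt_def)
  have b3: "sum ?h {3*g+2..<6*g+2} = of_nat (3*g) * f {1}" by (subst blk[where B="{1}"]) (auto simp: Bt_def)
  have b4: "sum ?h {6*g+2..<7*g+3} = of_nat (g+1) * f {2,3}" by (subst blk[where B="{2,3}"]) (auto simp: Bt_def)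
  have b5: "sum ?h {7*g+3..<8*g+4} = of_nat (g+1) * f {2,4}" by (subst blk[where B="{2,4}"]) (auto simp: Bt_def)
  have b6: "sum ?h {8*g+4..<10*g+4} = of_nat (2*g) * f {3}" by (subst blk[where B="{3}"]) (auto simp: Bt_def)
  have b7: "sum ?h {10*g+4..<12*g+4} = of_nat (2*g) * f {4}" by (subst blk[where B="{4}"]) (auto simp: Bt_def)
  show ?thesis unfolding e1 e2 e3 e4 e5 e6 b1 b2 b3 b4 b5 b6 b7 by (simp add: add.assoc)
qed

lemma sumB0:
  fixes f :: "nat set \<Rightarrow> rat"
  shows "(\<Sum>v\<in>{0..<12*g+4}. f (Bt g v)) = f {0,1} + (of_nat g * f {0,2} + of_nat (2*g+1) * f {0}
     + of_nat (3*g) * f {1} + of_nat (g+1) * f {2,3} + of_nat (g+1) * f {2,4}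
     + of_nat (2*g) * f {3} + of_nat (2*g) * f {4})"
proof -
  let ?h = "\<lambda>v. f (Bt g v)"
  have e1: "sum ?h {0..<12*g+4} = sum ?h {0..<1} + sum ?h {1..<12*g+4}"
    by (rule sum.atLeastLessThan_concat[symmetric]) auto
  have "sum ?h {0..<1} = f {0,1}" by (simp add: Bt_def)
  then show ?thesis unfolding e1 sumB1 by simp
qed

lemma card_At:
  assumes "Q \<subseteq> Pc p" "E \<subseteq> {0..<5}"
  shows "card (At p g v \<inter> (Q \<union> E)) = card Q + card (Bt g v \<inter> E)"
proof -
  have e: "At p g v \<inter> (Q \<union> E) = Q \<union> (Bt g v \<inter> E)"
    using assms Bt_sub[of g v] by (auto simp: At_def Pc_def)
  have fQ: "finite Q" using assms(1) finite_subset[of Q "Pc p"] by (simp add: Pc_def)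
  have d: "Q \<inter> (Bt g v \<inter> E) = {}" using assms Bt_sub[of g v] unfolding Pc_def subset_iff disjoint_iff by (metis Int_iff atLeastLessThan_iff not_le)
  show ?thesis unfolding e by (rule card_Un_disjoint) (use fQ d finite_subset[OF Bt_sub[of g v]] in auto)
qed

lemma score_QE:
  assumes "Q \<subseteq> Pc p" "E \<subseteq> {0..<5}"
  shows "thiele_score s N (At p g) (Q \<union> E) = (\<Sum>v\<in>N. s (card Q + card (Bt g v \<inter> E)))"
  unfolding thiele_score_def using card_At[OF assms] by simp

lemma card_Pc[simp]: "card (Pc p) = p" by (simp add: Pc_def)
lemma fin_Pc[simp]: "finite (Pc p)" by (simp add: Pc_def)

lemma tp_sub: "thiele_partial s C N A W \<Longrightarrow> W \<subseteq> C"
  by (induction rule: thiele_partial.induct) auto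

lemma pad:
  fixes s :: "nat \<Rightarrow> rat"
  assumes mo: "mono s" and Q: "Q \<subseteq> Pc p"
  shows "thiele_partial s {0..<5+p} N (At p g) Q"
proof -
  have "finite Q" using Q by (rule finite_subset) simp
  then show ?thesis using Q
  proof (induction rule: finite_subset_induct')
    case empty then show ?case by (rule thiele_init)
  next
    case (insert q F)
    have fF: "finite F" by fact
    have qin: "q \<in> {0..<5+p} - F" using insert by (auto simp: Pc_def)
    have sub: "insert q F \<subseteq> At p g v" for v using insert by (auto simp: At_def)
    have le: "thiele_score s N (At p g) (insert y F) \<le> thiele_score s N (At p g) (insert q F)" for y
      unfolding thiele_score_def
    proof (rule sum_mono)
      fix v
      have e: "At p g v \<inter> insert q F = insert q F" using sub[of v] by auto
      have c1: "card (insert q F) = card F + 1" using fF insert by simp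
      have "card (At p g v \<inter> insert y F) \<le> card (insert y F)" using fF by (intro card_mono) auto
      also have "\<dots> \<le> card F + 1" using fF by (simp add: card_insert_if)
      finally show "s (card (At p g v \<inter> insert y F)) \<le> s (card (At p g v \<inter> insert q F))"
        unfolding e c1 using mo by (simp add: monoD)
    qed
    show ?case by (rule thiele_step[OF insert(5) qin]) (use le in blast)
  qed
qed



context
  fixes s :: "nat \<Rightarrow> rat" and p g :: nat and a b :: rat
  assumes lin: "\<forall>j\<le>p+1. s j = of_nat j * a" and sp2: "s (p+2) = s (p+1) + b"
    and b0: "0 \<le> b" and ba: "b < a" and gk: "a \<le> of_nat g * (a - b)" and mo: "mono s"
begin

lemma a0: "0 < a" using b0 ba by simp
lemma g1: "1 \<le> g"
proof (rule ccontr)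
  assume "\<not> 1 \<le> g" then have "g = 0" by simp
  then show False using gk a0 by simp
qed
lemma gk': "a \<le> of_nat g * a - of_nat g * b" using gk by (simp add: algebra_simps)
lemma sP1: "s (p+1) = s p + a" "s (Suc p) = s p + a"
  using lin by (simp_all add: algebra_simps)
lemma sP2: "s (p+2) = s p + a + b" "s (Suc (Suc p)) = s p + a + b"
  using sp2 sP1 by (simp_all add: numeral_2_eq_2)

lemma V1: "E \<subseteq> {0..<5} \<Longrightarrow> thiele_score s {1..<12*g+4} (At p g) (Pc p \<union> E) =
   of_nat g * s (p + card ({0,2} \<inter> E)) + of_nat (2*g+1) * s (p + card ({0} \<inter> E))
     + of_nat (3*g) * s (p + card ({1} \<inter> E)) + of_nat (g+1) * s (p + card ({2,3} \<inter> E))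
     + of_nat (g+1) * s (p + card ({2,4} \<inter> E))
     + of_nat (2*g) * s (p + card ({3} \<inter> E)) + of_nat (2*g) * s (p + card ({4} \<inter> E))"
  using score_QE[of "Pc p" p E s "{1..<12*g+4}" g] sumB1[of "\<lambda>B. s (p + card (B \<inter> E))" g] by simp

lemma V0: "E \<subseteq> {0..<5} \<Longrightarrow> thiele_score s {0..<12*g+4} (At p g) (Pc p \<union> E) =
   s (p + card ({0,1} \<inter> E)) + (of_nat g * s (p + card ({0,2} \<inter> E)) + of_nat (2*g+1) * s (p + card ({0} \<inter> E))
     + of_nat (3*g) * s (p + card ({1} \<inter> E)) + of_nat (g+1) * s (p + card ({2,3} \<inter> E))
     + of_nat (g+1) * s (p + card ({2,4} \<inter> E))
     + of_nat (2*g) * s (p + card ({3} \<inter> E)) + of_nat (2*g) * s (p + card ({4} \<inter> E)))"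
  using score_QE[of "Pc p" p E s "{0..<12*g+4}" g] sumB0[of "\<lambda>B. s (p + card (B \<inter> E))" g] by simp

lemma w1_0: "thiele_score s {1..<12*g+4} (At p g) (Pc p \<union> {0}) < thiele_score s {1..<12*g+4} (At p g) (Pc p \<union> {2})"
  apply (subst V1, simp)+
  using gk' a0 b0 ba g1 by (simp add: sP1 sP2 algebra_simps)

lemma w1_1: "thiele_score s {1..<12*g+4} (At p g) (Pc p \<union> {1}) < thiele_score s {1..<12*g+4} (At p g) (Pc p \<union> {2})"
  apply (subst V1, simp)+
  using gk' a0 b0 ba g1 by (simp add: sP1 sP2 algebra_simps)

lemma w1_3: "thiele_score s {1..<12*g+4} (At p g) (Pc p \<union> {3}) < thiele_score s {1..<12*g+4} (At p g) (Pc p \<union> {2})"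
  apply (subst V1, simp)+
  using gk' a0 b0 ba g1 by (simp add: sP1 sP2 algebra_simps)

lemma w1_4: "thiele_score s {1..<12*g+4} (At p g) (Pc p \<union> {4}) < thiele_score s {1..<12*g+4} (At p g) (Pc p \<union> {2})"
  apply (subst V1, simp)+
  using gk' a0 b0 ba g1 by (simp add: sP1 sP2 algebra_simps)

lemma w2_3: "thiele_score s {1..<12*g+4} (At p g) (Pc p \<union> {3,2}) < thiele_score s {1..<12*g+4} (At p g) (Pc p \<union> {1,2})"
  apply (subst V1, simp)+
  using gk' a0 b0 ba g1 by (simp add: sP1 sP2 algebra_simps)

lemma w2_4: "thiele_score s {1..<12*g+4} (At p g) (Pc p \<union> {4,2}) < thiele_score s {1..<12*g+4} (At p g) (Pc p \<union> {1,2})"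
  apply (subst V1, simp)+
  using gk' a0 b0 ba g1 by (simp add: sP1 sP2 algebra_simps)

lemma w2_0: "thiele_score s {1..<12*g+4} (At p g) (Pc p \<union> {0,2}) \<le> thiele_score s {1..<12*g+4} (At p g) (Pc p \<union> {1,2})"
  apply (subst V1, simp)+
  using gk' a0 b0 ba g1 by (simp add: sP1 sP2 algebra_simps)

lemma w3_3: "thiele_score s {1..<12*g+4} (At p g) (Pc p \<union> {3,0,2}) < thiele_score s {1..<12*g+4} (At p g) (Pc p \<union> {1,0,2})"
  apply (subst V1, simp)+
  using gk' a0 b0 ba g1 by (simp add: sP1 sP2 algebra_simps)

lemma w3_4: "thiele_score s {1..<12*g+4} (At p g) (Pc p \<union> {4,0,2}) < thiele_score s {1..<12*g+4} (At p g) (Pc p \<union> {1,0,2})"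
  apply (subst V1, simp)+
  using gk' a0 b0 ba g1 by (simp add: sP1 sP2 algebra_simps)

lemma w4_3: "thiele_score s {1..<12*g+4} (At p g) (Pc p \<union> {3,1,2}) < thiele_score s {1..<12*g+4} (At p g) (Pc p \<union> {0,1,2})"
  apply (subst V1, simp)+
  using gk' a0 b0 ba g1 by (simp add: sP1 sP2 algebra_simps)

lemma w4_4: "thiele_score s {1..<12*g+4} (At p g) (Pc p \<union> {4,1,2}) < thiele_score s {1..<12*g+4} (At p g) (Pc p \<union> {0,1,2})"
  apply (subst V1, simp)+
  using gk' a0 b0 ba g1 by (simp add: sP1 sP2 algebra_simps)

lemma v1_1: "thiele_score s {0..<12*g+4} (At p g) (Pc p \<union> {1}) \<le> thiele_score s {0..<12*g+4} (At p g) (Pc p \<union> {0})"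
  apply (subst V0, simp)+
  using gk' a0 b0 ba g1 by (simp add: sP1 sP2 algebra_simps)

lemma v1_2: "thiele_score s {0..<12*g+4} (At p g) (Pc p \<union> {2}) \<le> thiele_score s {0..<12*g+4} (At p g) (Pc p \<union> {0})"
  apply (subst V0, simp)+
  using gk' a0 b0 ba g1 by (simp add: sP1 sP2 algebra_simps)

lemma v1_3: "thiele_score s {0..<12*g+4} (At p g) (Pc p \<union> {3}) \<le> thiele_score s {0..<12*g+4} (At p g) (Pc p \<union> {0})"
  apply (subst V0, simp)+
  using gk' a0 b0 ba g1 by (simp add: sP1 sP2 algebra_simps)

lemma v1_4: "thiele_score s {0..<12*g+4} (At p g) (Pc p \<union> {4}) \<le> thiele_score s {0..<12*g+4} (At p g) (Pc p \<union> {0})"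
  apply (subst V0, simp)+
  using gk' a0 b0 ba g1 by (simp add: sP1 sP2 algebra_simps)

lemma v2_1: "thiele_score s {0..<12*g+4} (At p g) (Pc p \<union> {1,0}) \<le> thiele_score s {0..<12*g+4} (At p g) (Pc p \<union> {3,0})"
  apply (subst V0, simp)+
  using gk' a0 b0 ba g1 by (simp add: sP1 sP2 algebra_simps)

lemma v2_2: "thiele_score s {0..<12*g+4} (At p g) (Pc p \<union> {2,0}) \<le> thiele_score s {0..<12*g+4} (At p g) (Pc p \<union> {3,0})"
  apply (subst V0, simp)+
  using gk' a0 b0 ba g1 by (simp add: sP1 sP2 algebra_simps)

lemma v2_4: "thiele_score s {0..<12*g+4} (At p g) (Pc p \<union> {4,0}) \<le> thiele_score s {0..<12*g+4} (At p g) (Pc p \<union> {3,0})"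
  apply (subst V0, simp)+
  using gk' a0 b0 ba g1 by (simp add: sP1 sP2 algebra_simps)

lemma v3_1: "thiele_score s {0..<12*g+4} (At p g) (Pc p \<union> {1,3,0}) \<le> thiele_score s {0..<12*g+4} (At p g) (Pc p \<union> {4,3,0})"
  apply (subst V0, simp)+
  using gk' a0 b0 ba g1 by (simp add: sP1 sP2 algebra_simps)

lemma v3_2: "thiele_score s {0..<12*g+4} (At p g) (Pc p \<union> {2,3,0}) \<le> thiele_score s {0..<12*g+4} (At p g) (Pc p \<union> {4,3,0})"
  apply (subst V0, simp)+
  using gk' a0 b0 ba g1 by (simp add: sP1 sP2 algebra_simps)


lemma padstrict:
  assumes W: "W \<subseteq> Pc p" "W \<noteq> Pc p" and q: "q \<in> Pc p - W" and x: "x < 5"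
  shows "thiele_score s {1..<12*g+4} (At p g) (insert x W) < thiele_score s {1..<12*g+4} (At p g) (insert q W)"
proof -
  have fW: "finite W" using W(1) by (rule finite_subset) simp
  have cW: "card W < p" using psubset_card_mono[of "Pc p" W] W by auto
  have e1: "insert x W = W \<union> {x}" by auto
  have e2: "insert q W = insert q W \<union> {}" by auto
  have qW: "insert q W \<subseteq> Pc p" using W q by auto
  have c2: "card (insert q W) = card W + 1" using q fW by simp
  have L: "thiele_score s {1..<12*g+4} (At p g) (insert x W) = (\<Sum>v\<in>{1..<12*g+4}. s (card W + card (Bt g v \<inter> {x})))"
    unfolding e1 by (rule score_QE) (use W x in auto)
  have R: "thiele_score s {1..<12*g+4} (At p g) (insert q W) = (\<Sum>v\<in>{1..<12*g+4}. s (card W + 1))"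
    by (subst e2, subst score_QE) (use qW c2 in auto)
  have sm: "s (card W) < s (card W + 1)"
  proof -
    have "s (card W) = of_nat (card W) * a" using lin cW by simp
    moreover have "s (card W + 1) = of_nat (card W + 1) * a" using lin cW by simp
    ultimately show ?thesis using a0 by (simp add: algebra_simps)
  qed
  show ?thesis unfolding L R
  proof (rule sum_strict_mono_ex1)
    show "\<forall>v\<in>{1..<12 * g + 4}. s (card W + card (Bt g v \<inter> {x})) \<le> s (card W + 1)"
    proof
      fix v
      have "card (Bt g v \<inter> {x}) \<le> 1" by (cases "x \<in> Bt g v") auto
      then show "s (card W + card (Bt g v \<inter> {x})) \<le> s (card W + 1)" using mo by (simp add: monoD)
    qed
    define v where "v = (if x = 4 then 1 else 12*g+3)"
    have vN: "v \<in> {1..<12*g+4}" using g1 by (auto simp: v_def)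
    have "x \<notin> Bt g v" using g1 x by (auto simp: v_def Bt_def)
    then have c0: "card (Bt g v \<inter> {x}) = 0" by simp
    show "\<exists>v\<in>{1..<12 * g + 4}. s (card W + card (Bt g v \<inter> {x})) < s (card W + 1)"
      by (rule bexI[OF _ vN]) (simp only: c0 add_0_right sm)
  qed simp
qed

lemma inv:
  "thiele_partial s {0..<5+p} {1..<12*g+4} (At p g) W \<Longrightarrow> card W \<le> p+3 \<Longrightarrow>
   W \<subseteq> Pc p \<or> W = Pc p \<union> {2} \<or> W = Pc p \<union> {0,2} \<or> W = Pc p \<union> {1,2} \<or> W = Pc p \<union> {0,1,2}"
proof (induction rule: thiele_partial.induct)
  case thiele_init then show ?case by simp
next
  case (thiele_step W x)
  let ?sc = "thiele_score s {1..<12*g+4} (At p g)"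
  have WC: "W \<subseteq> {0..<5+p}" using tp_sub[OF thiele_step(1)] .
  have fW: "finite W" using WC by (rule finite_subset) simp
  have xW: "x \<notin> W" and xC: "x \<in> {0..<5+p}" using thiele_step(2) by auto
  have cW: "card W \<le> p+3" using thiele_step.prems fW xW by simp
  have mx: "\<And>y. y \<in> {0..<5+p} - W \<Longrightarrow> ?sc (insert y W) \<le> ?sc (insert x W)" using thiele_step(3) by blast
  have mxE: "?sc (Pc p \<union> insert y E) \<le> ?sc (Pc p \<union> insert x E)"
    if "W = Pc p \<union> E" "y < 5" "y \<notin> E" for E y
  proof -
    have "y \<in> {0..<5+p} - W" using that by (auto simp: Pc_def)
    then have "?sc (insert y W) \<le> ?sc (insert x W)" by (rule mx)
    moreover have "insert y W = Pc p \<union> insert y E" "insert x W = Pc p \<union> insert x E" using that by auto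
    ultimately show ?thesis by simp
  qed
  have x5E: "x < 5 \<and> x \<notin> E" if "W = Pc p \<union> E" for E using that xC xW by (auto simp: Pc_def)
  from thiele_step.IH[OF cW] consider (a) "W \<subseteq> Pc p" | (b) "W = Pc p \<union> {2}" | (c) "W = Pc p \<union> {0,2}"
    | (d) "W = Pc p \<union> {1,2}" | (e) "W = Pc p \<union> {0,1,2}" by blast
  then show ?case
  proof cases
    case a
    show ?thesis
    proof (cases "W = Pc p")
      case True
      then have W': "W = Pc p \<union> {}" by simp
      have x5: "x < 5" using x5E[OF W'] by simp
      have m: "?sc (Pc p \<union> {2}) \<le> ?sc (Pc p \<union> {x})" using mxE[OF W', of 2] by simp
      have "x = 2"
      proof (rule ccontr)
        assume "x \<noteq> 2"
        then have "x = 0 \<or> x = 1 \<or> x = 3 \<or> x = 4" using x5 by auto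
        then show False using m w1_0 w1_1 w1_3 w1_4 by auto
      qed
      then show ?thesis using True by auto
    next
      case False
      show ?thesis
      proof (cases "x \<in> Pc p")
        case True then show ?thesis using a by auto
      next
        case xP: False
        then have x5: "x < 5" using xC by (auto simp: Pc_def)
        obtain q where q: "q \<in> Pc p - W" using a False by blast
        have "q \<in> {0..<5+p} - W" using q by (auto simp: Pc_def)
        then have "?sc (insert q W) \<le> ?sc (insert x W)" by (rule mx)
        then show ?thesis using padstrict[OF a False q x5] by simp
      qed
    qed
  next
    case b
    have x5: "x < 5" "x \<noteq> 2" using x5E[OF b] by auto
    have m: "?sc (Pc p \<union> {1,2}) \<le> ?sc (Pc p \<union> {x,2})" using mxE[OF b, of 1] by simp
    have "x = 0 \<or> x = 1"
    proof (rule ccontr)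
      assume "\<not> (x = 0 \<or> x = 1)"
      then have "x = 3 \<or> x = 4" using x5 by auto
      then show False using m w2_3 w2_4 by auto
    qed
    then show ?thesis using b by auto
  next
    case c
    have x5: "x < 5" "x \<notin> {0,2}" using x5E[OF c] by auto
    have m: "?sc (Pc p \<union> {1,0,2}) \<le> ?sc (Pc p \<union> {x,0,2})" using mxE[OF c, of 1] by simp
    have "x = 1"
    proof (rule ccontr)
      assume "x \<noteq> 1"
      then have "x = 3 \<or> x = 4" using x5 by auto
      then show False using m w3_3 w3_4 by auto
    qed
    then show ?thesis using c by auto
  next
    case d
    have x5: "x < 5" "x \<notin> {1,2}" using x5E[OF d] by auto
    have m: "?sc (Pc p \<union> {0,1,2}) \<le> ?sc (Pc p \<union> {x,1,2})" using mxE[OF d, of 0] by simp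
    have "x = 0"
    proof (rule ccontr)
      assume "x \<noteq> 0"
      then have "x = 3 \<or> x = 4" using x5 by auto
      then show False using m w4_3 w4_4 by auto
    qed
    then show ?thesis using d by auto
  next
    case e
    have "card W = p + 3" using e by (simp add: card_Un_disjoint Pc_def)
    then show ?thesis using thiele_step.prems fW xW by simp
  qed
qed


lemma cardPE: "E \<subseteq> {0..<5} \<Longrightarrow> card (Pc p \<union> E) = p + card E"
  by (subst card_Un_disjoint) (auto simp: Pc_def intro: finite_subset)

lemma chain_step:
  assumes tp: "thiele_partial s {0..<5+p} N (At p g) (Pc p \<union> E)" and x: "x < 5" "x \<notin> E"
    and mx: "\<And>y. y < 5 \<Longrightarrow> y \<notin> E \<Longrightarrow>
      thiele_score s N (At p g) (Pc p \<union> insert y E) \<le> thiele_score s N (At p g) (Pc p \<union> insert x E)"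
  shows "thiele_partial s {0..<5+p} N (At p g) (Pc p \<union> insert x E)"
proof -
  have "thiele_partial s {0..<5+p} N (At p g) (insert x (Pc p \<union> E))"
  proof (rule thiele_step[OF tp])
    show "x \<in> {0..<5+p} - (Pc p \<union> E)" using x by (auto simp: Pc_def)
    show "\<forall>y\<in>{0..<5 + p} - (Pc p \<union> E). thiele_score s N (At p g) (insert y (Pc p \<union> E))
        \<le> thiele_score s N (At p g) (insert x (Pc p \<union> E))"
    proof
      fix y assume "y \<in> {0..<5 + p} - (Pc p \<union> E)"
      then have "y < 5" "y \<notin> E" by (auto simp: Pc_def)
      from mx[OF this] show "thiele_score s N (At p g) (insert y (Pc p \<union> E))
        \<le> thiele_score s N (At p g) (insert x (Pc p \<union> E))" by simp
    qed
  qed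
  then show ?thesis by simp
qed

lemma Bt_ne: "Bt g v \<noteq> {}" by (simp add: Bt_def)

lemma five: "(y::nat) < 5 \<Longrightarrow> y = 0 \<or> y = 1 \<or> y = 2 \<or> y = 3 \<or> y = 4" by auto

lemma chainX: "thiele_partial s {0..<5+p} {1..<12*g+4} (At p g) (Pc p \<union> {0,1,2})"
proof -
  let ?N = "{1..<12*g+4}"
  have c0: "thiele_partial s {0..<5+p} ?N (At p g) (Pc p \<union> {})" using pad[OF mo, of "Pc p" p ?N g] by simp
  have c1: "thiele_partial s {0..<5+p} ?N (At p g) (Pc p \<union> {2})"
  proof (rule chain_step[OF c0])
    fix y :: nat assume y5: "y < 5" "y \<notin> {}"
    then show "thiele_score s ?N (At p g) (Pc p \<union> insert y {}) \<le> thiele_score s ?N (At p g) (Pc p \<union> {2})"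
      using five[OF y5(1)] less_imp_le[OF w1_0] less_imp_le[OF w1_1] less_imp_le[OF w1_3] less_imp_le[OF w1_4]
      by (elim disjE) simp_all
  qed simp_all
  have c2: "thiele_partial s {0..<5+p} ?N (At p g) (Pc p \<union> {1,2})"
  proof (rule chain_step[OF c1])
    fix y :: nat assume y5: "y < 5" "y \<notin> {2}"
    then show "thiele_score s ?N (At p g) (Pc p \<union> insert y {2}) \<le> thiele_score s ?N (At p g) (Pc p \<union> {1,2})"
      using five[OF y5(1)] w2_0 less_imp_le[OF w2_3] less_imp_le[OF w2_4]
      by (elim disjE) simp_all
  qed simp_all
  have c3: "thiele_partial s {0..<5+p} ?N (At p g) (Pc p \<union> {0,1,2})"
  proof (rule chain_step[OF c2])
    fix y :: nat assume y5: "y < 5" "y \<notin> {1,2}"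
    then show "thiele_score s ?N (At p g) (Pc p \<union> insert y {1,2}) \<le> thiele_score s ?N (At p g) (Pc p \<union> {0,1,2})"
      using five[OF y5(1)] less_imp_le[OF w4_3] less_imp_le[OF w4_4]
      by (elim disjE) simp_all
  qed simp_all
  then show ?thesis .
qed

lemma chainY: "thiele_partial s {0..<5+p} {0..<12*g+4} (At p g) (Pc p \<union> {4,3,0})"
proof -
  let ?N = "{0..<12*g+4}"
  have c0: "thiele_partial s {0..<5+p} ?N (At p g) (Pc p \<union> {})" using pad[OF mo, of "Pc p" p ?N g] by simp
  have c1: "thiele_partial s {0..<5+p} ?N (At p g) (Pc p \<union> {0})"
  proof (rule chain_step[OF c0])
    fix y :: nat assume y5: "y < 5" "y \<notin> {}"
    then show "thiele_score s ?N (At p g) (Pc p \<union> insert y {}) \<le> thiele_score s ?N (At p g) (Pc p \<union> {0})"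
      using five[OF y5(1)] v1_1 v1_2 v1_3 v1_4
      by (elim disjE) simp_all
  qed simp_all
  have c2: "thiele_partial s {0..<5+p} ?N (At p g) (Pc p \<union> {3,0})"
  proof (rule chain_step[OF c1])
    fix y :: nat assume y5: "y < 5" "y \<notin> {0}"
    then show "thiele_score s ?N (At p g) (Pc p \<union> insert y {0}) \<le> thiele_score s ?N (At p g) (Pc p \<union> {3,0})"
      using five[OF y5(1)] v2_1 v2_2 v2_4
      by (elim disjE) simp_all
  qed simp_all
  have c3: "thiele_partial s {0..<5+p} ?N (At p g) (Pc p \<union> {4,3,0})"
  proof (rule chain_step[OF c2])
    fix y :: nat assume y5: "y < 5" "y \<notin> {3,0}"
    then show "thiele_score s ?N (At p g) (Pc p \<union> insert y {3,0}) \<le> thiele_score s ?N (At p g) (Pc p \<union> {4,3,0})"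
      using five[OF y5(1)] v3_1 v3_2
      by (elim disjE) simp_all
  qed simp_all
  then show ?thesis .
qed

lemma thiele_fail: "fails_participation (seq_thiele s :: nat set \<Rightarrow> nat set \<Rightarrow> (nat \<Rightarrow> nat set) \<Rightarrow> nat \<Rightarrow> nat set set)"
proof -
  let ?C = "{0..<5+p}" and ?N = "{0..<12*g+4}" and ?k = "p+3" and ?B = "Pc p \<union> {0,1}"
  have h1: "finite ?C" by simp
  have h2: "1 < card ?C" by simp
  have h3: "1 \<le> p + 3" by simp
  have h4: "p + 3 < card ?C" by simp
  have h5: "is_profile ?C ?N (At p g)"
    unfolding is_profile_def
  proof (intro conjI ballI)
    fix i
    show "At p g i \<noteq> {}" by (simp add: At_def Bt_ne)
    have "Pc p \<subseteq> ?C" by (auto simp: Pc_def)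
    moreover have "Bt g i \<subseteq> ?C" using Bt_sub[of g i] by auto
    ultimately show "At p g i \<subseteq> ?C" by (simp add: At_def)
  qed auto
  have h6: "2 \<le> card ?N" by simp
  have h7: "(0::nat) \<in> ?N" by simp
  have NN: "?N - {0} = {1..<12*g+4}" by auto
  have B: "At p g 0 = ?B" by (simp add: At_def Bt_def)
  have cB: "card ?B = p + 2" using cardPE[of "{0,1}"] by simp
  have X: "W = Pc p \<union> {0,1,2}" if "W \<in> seq_thiele s ?C (?N - {0}) (At p g) ?k" for W
  proof -
    have tW: "thiele_partial s ?C {1..<12*g+4} (At p g) W" and cW: "card W = p+3"
      using that unfolding seq_thiele_def NN by auto
    have "\<not> W \<subseteq> Pc p"
    proof
      assume "W \<subseteq> Pc p" then have "card W \<le> p" using card_mono[of "Pc p" W] by simp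
      then show False using cW by simp
    qed
    moreover have "card (Pc p \<union> {2}) = p+1" "card (Pc p \<union> {0,2}) = p+2" "card (Pc p \<union> {1,2}) = p+2"
      using cardPE[of "{2}"] cardPE[of "{0,2}"] cardPE[of "{1,2}"] by auto
    ultimately show ?thesis using inv[OF tW] cW by auto
  qed
  have h8: "kelly_strict (At p g 0) (seq_thiele s ?C (?N - {0}) (At p g) ?k) (seq_thiele s ?C ?N (At p g) ?k)"
    unfolding kelly_strict_def B
  proof (intro conjI ballI)
    fix W W' assume W: "W \<in> seq_thiele s ?C (?N - {0}) (At p g) ?k"
    have "W \<inter> ?B = ?B" using X[OF W] by auto
    moreover have "card (W' \<inter> ?B) \<le> card ?B" by (rule card_mono) (auto simp: Pc_def)
    ultimately show "card (W' \<inter> ?B) \<le> card (W \<inter> ?B)" by simp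
  next
    have inX: "Pc p \<union> {0,1,2} \<in> seq_thiele s ?C (?N - {0}) (At p g) ?k"
      unfolding seq_thiele_def NN using chainX cardPE[of "{0,1,2}"] by simp
    have inY: "Pc p \<union> {4,3,0} \<in> seq_thiele s ?C ?N (At p g) ?k"
      unfolding seq_thiele_def using chainY cardPE[of "{4,3,0}"] by simp
    have e1: "(Pc p \<union> {0,1,2}) \<inter> ?B = ?B" by auto
    have e2: "(Pc p \<union> {4,3,0}) \<inter> ?B = Pc p \<union> {0}" by (auto simp: Pc_def)
    have c1: "card (Pc p \<union> {0}) = p + 1" using cardPE[of "{0}"] by simp
    show "\<exists>W\<in>seq_thiele s ?C (?N - {0}) (At p g) ?k. \<exists>W'\<in>seq_thiele s ?C ?N (At p g) ?k.
        card (W' \<inter> ?B) < card (W \<inter> ?B)"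
      apply (rule bexI[OF _ inX], rule bexI[OF _ inY])
      unfolding e1 e2 using cB c1 by simp
  qed
  show ?thesis unfolding fails_participation_def
    apply (rule exI)+
    by (rule conjI[OF h1], rule conjI[OF h2], rule conjI[OF h3], rule conjI[OF h4],
        rule conjI[OF h5], rule conjI[OF h6], rule conjI[OF h7], rule h8)
qed

end

theorem thiele_part:
  fixes s :: "nat \<Rightarrow> rat"
  assumes "s 0 = 0" "0 < s 1" "mono s" "\<forall>x. s (x + 2) - s (x + 1) \<le> s (x + 1) - s x"
    "\<not> (\<exists>\<alpha>. \<forall>x. s x = \<alpha> * of_nat x)"
  shows "fails_participation (seq_thiele s :: nat set \<Rightarrow> nat set \<Rightarrow> (nat \<Rightarrow> nat set) \<Rightarrow> nat \<Rightarrow> nat set set)"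
proof -
  obtain p b where lin: "\<forall>j\<le>p+1. s j = of_nat j * s 1" and sp2: "s (p+2) = s (p+1) + b"
    and b0: "0 \<le> b" and ba: "b < s 1"
    using thiele_param[OF assms] by blast
  have pos: "0 < s 1 - b" using ba by simp
  obtain g :: nat where gg: "s 1 / (s 1 - b) \<le> of_nat g" using real_arch_simple by blast
  have gk: "s 1 \<le> of_nat g * (s 1 - b)" using gg pos by (simp add: divide_le_eq)
  show ?thesis by (rule thiele_fail[OF lin sp2 b0 ba gk assms(3)])
qed



lemma supp_empty[simp]: "supporters {} A c = {}" by (simp add: supporters_def)
lemma supp_insert[simp]: "supporters (insert a N) A c = (if c \<in> A a then insert a (supporters N A c) else supporters N A c)"
  by (auto simp: supporters_def)

definition Aph :: "nat \<Rightarrow> nat set" where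
  "Aph v = (if v = 0 then {0,2} else if v = 1 then {0,1} else if v = 2 then {0,3} else if v = 3 then {0,1,3}
     else if v = 4 then {2,3} else if v = 5 then {2,3} else {0,1,3})"

lemma pp_sub: "phrag_partial C N A W y \<Longrightarrow> W \<subseteq> C"
  by (induction rule: phrag_partial.induct) auto

lemma ph_inv:
  "phrag_partial {0,1,2,3} {1,2,3,4,5,6} Aph W y \<Longrightarrow> card W \<le> 3 \<Longrightarrow>
    (W = {} \<and> y = (\<lambda>_. 0)) \<or>
    (W = {3} \<and> y = (\<lambda>i. if i \<in> {2,3,4,5,6} then 1/5 else 0)) \<or>
    (W = {0,3} \<and> y = (\<lambda>i. if i \<in> {1,2,3,6} then 2/5 else if i \<in> {4,5} then 1/5 else 0)) \<or>
    W = {0,2,3}"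
proof (induction rule: phrag_partial.induct)
  case phrag_init then show ?case by simp
next
  case (phrag_step W y x)
  let ?N = "{1,2,3,4,5,6} :: nat set"
  have xC: "x \<in> {0,1,2,3}" "x \<notin> W" using phrag_step(2) by auto
  have cond: "\<And>c. c \<in> {0,1,2,3} - W \<Longrightarrow> supporters ?N Aph c \<noteq> {} \<Longrightarrow> phrag_load ?N Aph y x \<le> phrag_load ?N Aph y c"
    using phrag_step(3) by blast
  have fW: "finite W" using pp_sub[OF phrag_step(1)] finite_subset by auto
  have cW: "card W \<le> 3" using phrag_step.prems fW xC by simp
  from phrag_step.IH[OF cW] consider (a) "W = {}" "y = (\<lambda>_. 0)"
    | (b) "W = {3}" "y = (\<lambda>i. if i \<in> {2,3,4,5,6} then 1/5 else 0)"
    | (c) "W = {0,3}" "y = (\<lambda>i. if i \<in> {1,2,3,6} then 2/5 else if i \<in> {4,5} then 1/5 else 0)"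
    | (d) "W = {0,2,3}" by blast
  then show ?case
  proof cases
    case a
    have "phrag_load ?N Aph y x \<le> phrag_load ?N Aph y 3" using cond[of 3] a by (simp add: Aph_def)
    then have "x = 3" using xC a by (auto simp: phrag_load_def Aph_def)
    then show ?thesis using a by (auto simp: phrag_load_def Aph_def)
  next
    case b
    have "phrag_load ?N Aph y x \<le> phrag_load ?N Aph y 0" using cond[of 0] b by (simp add: Aph_def)
    then have x0: "x = 0" using xC b by (auto simp: phrag_load_def Aph_def)
    have l0: "phrag_load ?N Aph y 0 = 2/5" using b by (simp add: phrag_load_def Aph_def)
    have "(\<lambda>i. if i \<in> supporters ?N Aph x then phrag_load ?N Aph y x else y i) =
       (\<lambda>i. if i \<in> {1,2,3,6} then 2/5 else if i \<in> {4,5} then 1/5 else 0)"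
      unfolding x0 l0 using b by (auto simp: Aph_def intro!: ext)
    then show ?thesis using b x0 by auto
  next
    case c
    have "phrag_load ?N Aph y x \<le> phrag_load ?N Aph y 2" using cond[of 2] c by (simp add: Aph_def)
    then have "x = 2" using xC c by (auto simp: phrag_load_def Aph_def)
    then show ?thesis using c by auto
  next
    case d
    then show ?thesis using phrag_step.prems xC by simp
  qed
qed



lemma ph_step':
  assumes "phrag_partial C N A W y" "x \<in> C - W"
    "\<forall>c\<in>C - W. supporters N A c \<noteq> {} \<longrightarrow> supporters N A x \<noteq> {} \<and> phrag_load N A y x \<le> phrag_load N A y c"
    "\<And>i. y' i = (if i \<in> supporters N A x then phrag_load N A y x else y i)"
  shows "phrag_partial C N A (insert x W) y'"
proof -
  have "y' = (\<lambda>i. if i \<in> supporters N A x then phrag_load N A y x else y i)" using assms(4) by auto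
  then show ?thesis using phrag_step[OF assms(1-3)] by simp
qed

lemma ph_chainX: "\<exists>y. phrag_partial {0,1,2,3} {1,2,3,4,5,6} Aph {2,0,3} y"
proof -
  let ?C = "{0,1,2,3} :: nat set" and ?N = "{1,2,3,4,5,6} :: nat set"
  note s0 = phrag_init[of ?C ?N Aph]
  have s1: "phrag_partial ?C ?N Aph {3} (\<lambda>i. if i \<in> {2,3,4,5,6} then 1/5 else 0)"
    by (rule ph_step'[OF s0]) (auto simp: phrag_load_def Aph_def)
  have s2: "phrag_partial ?C ?N Aph {0,3} (\<lambda>i. if i \<in> {1,2,3,6} then 2/5 else if i \<in> {4,5} then 1/5 else 0)"
    by (rule ph_step'[OF s1]) (auto simp: phrag_load_def Aph_def)
  have s3: "phrag_partial ?C ?N Aph {2,0,3} (\<lambda>i. if i \<in> {4,5} then 7/10 else if i \<in> {1,2,3,6} then 2/5 else 0)"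
    by (rule ph_step'[OF s2]) (auto simp: phrag_load_def Aph_def)
  then show ?thesis by blast
qed

lemma ph_chainY: "\<exists>y. phrag_partial {0,1,2,3} {0,1,2,3,4,5,6} Aph {1,3,0} y"
proof -
  let ?C = "{0,1,2,3} :: nat set" and ?N = "{0,1,2,3,4,5,6} :: nat set"
  note s0 = phrag_init[of ?C ?N Aph]
  have s1: "phrag_partial ?C ?N Aph {0} (\<lambda>i. if i \<in> {0,1,2,3,6} then 1/5 else 0)"
    by (rule ph_step'[OF s0]) (auto simp: phrag_load_def Aph_def)
  have s2: "phrag_partial ?C ?N Aph {3,0} (\<lambda>i. if i \<in> {2,3,4,5,6} then 8/25 else if i \<in> {0,1} then 1/5 else 0)"
    by (rule ph_step'[OF s1]) (auto simp: phrag_load_def Aph_def)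
  have s3: "phrag_partial ?C ?N Aph {1,3,0} (\<lambda>i. if i \<in> {1,3,6} then 46/75 else if i \<in> {2,4,5} then 8/25 else if i = 0 then 1/5 else 0)"
    by (rule ph_step'[OF s2]) (auto simp: phrag_load_def Aph_def)
  then show ?thesis by blast
qed


lemma phrag_fail: "fails_participation (seq_phragmen :: nat set \<Rightarrow> nat set \<Rightarrow> (nat \<Rightarrow> nat set) \<Rightarrow> nat \<Rightarrow> nat set set)"
proof -
  let ?C = "{0,1,2,3} :: nat set" and ?N = "{0,1,2,3,4,5,6} :: nat set" and ?B = "{0,2} :: nat set"
  have h1: "finite ?C" by simp
  have h2: "1 < card ?C" by simp
  have h3: "1 \<le> (3::nat)" by simp
  have h4: "3 < card ?C" by simp
  have h5: "is_profile ?C ?N Aph" unfolding is_profile_def by (auto simp: Aph_def)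
  have h6: "2 \<le> card ?N" by simp
  have h7: "(0::nat) \<in> ?N" by simp
  have NN: "?N - {0} = {1,2,3,4,5,6}" by auto
  have B: "Aph 0 = ?B" by (simp add: Aph_def)
  have X: "W = {0,2,3}" if Wm: "W \<in> seq_phragmen ?C (?N - {0}) Aph 3" for W
  proof -
    obtain y where tW: "phrag_partial ?C {1,2,3,4,5,6} Aph W y" and cW: "card W = 3"
      using Wm unfolding seq_phragmen_def NN mem_Collect_eq by blast
    show ?thesis using ph_inv[OF tW] cW by auto
  qed
  have h8: "kelly_strict (Aph 0) (seq_phragmen ?C (?N - {0}) Aph 3) (seq_phragmen ?C ?N Aph 3)"
    unfolding kelly_strict_def B
  proof (intro conjI ballI)
    fix W W' assume W: "W \<in> seq_phragmen ?C (?N - {0}) Aph 3"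
    have "W \<inter> ?B = ?B" using X[OF W] by auto
    moreover have "card (W' \<inter> ?B) \<le> card ?B" by (rule card_mono) auto
    ultimately show "card (W' \<inter> ?B) \<le> card (W \<inter> ?B)" by simp
  next
    have inX: "{2,0,3} \<in> seq_phragmen ?C (?N - {0}) Aph 3"
      unfolding seq_phragmen_def NN using ph_chainX by simp
    have inY: "{1,3,0} \<in> seq_phragmen ?C ?N Aph 3"
      unfolding seq_phragmen_def using ph_chainY by simp
    show "\<exists>W\<in>seq_phragmen ?C (?N - {0}) Aph 3. \<exists>W'\<in>seq_phragmen ?C ?N Aph 3.
        card (W' \<inter> ?B) < card (W \<inter> ?B)"
      apply (rule bexI[OF _ inX], rule bexI[OF _ inY]) by simp
  qed
  show ?thesis unfolding fails_participation_def
    apply (rule exI)+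
    by (rule conjI[OF h1], rule conjI[OF h2], rule conjI[OF h3], rule conjI[OF h4],
        rule conjI[OF h5], rule conjI[OF h6], rule conjI[OF h7], rule h8)
qed



lemma rho_eq:
  assumes fin: "finite S" and r0: "0 \<le> r0" and sm: "(\<Sum>i\<in>S. min r0 (x i)) = 1"
    and ex: "\<exists>i\<in>S. r0 \<le> x i"
  shows "mes_rho x S = r0"
  unfolding mes_rho_def
proof (rule cInf_eq_minimum)
  show "r0 \<in> {r. 0 \<le> r \<and> (\<Sum>i\<in>S. min r (x i)) = 1}" using r0 sm by simp
  fix r assume "r \<in> {r. 0 \<le> r \<and> (\<Sum>i\<in>S. min r (x i)) = 1}"
  then have r: "0 \<le> r" "(\<Sum>i\<in>S. min r (x i)) = 1" by auto
  show "r0 \<le> r"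
  proof (rule ccontr)
    assume "\<not> r0 \<le> r" then have lt: "r < r0" by simp
    have "(\<Sum>i\<in>S. min r (x i)) < (\<Sum>i\<in>S. min r0 (x i))"
    proof (rule sum_strict_mono_ex1[OF fin])
      show "\<forall>i\<in>S. min r (x i) \<le> min r0 (x i)" using lt by auto
      from ex obtain i where "i \<in> S" "r0 \<le> x i" by blast
      then show "\<exists>i\<in>S. min r (x i) < min r0 (x i)" using lt by (intro bexI[of _ i]) auto
    qed
    then show False using r sm by simp
  qed
qed


definition Ames :: "nat \<Rightarrow> nat set" where
  "Ames v = (if v = 0 then {1,3} else if v = 1 then {0,3} else if v = 2 then {1,2} else if v = 3 then {0,2}
     else if v = 4 then {0,3} else if v = 5 then {1,3} else if v = 6 then {1,2} else {0})"

lemma mes_sub: "mes_partial C N A k W x b \<Longrightarrow> W \<subseteq> C"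
  by (induction rule: mes_partial.induct) auto

lemma mes_inv:
  "mes_partial {0,1,2,3} {1,2,3,4,5,6,7} Ames 3 W x b \<Longrightarrow> card W \<le> 3 \<Longrightarrow>
    (W = {} \<and> x = (\<lambda>_. 3/7) \<and> \<not> b) \<or>
    (W = {0} \<and> x = (\<lambda>i. if i \<in> {1,3,4,7} then 5/28 else 3/7) \<and> \<not> b) \<or>
    (W = {0,1} \<and> x = (\<lambda>i. if i \<in> {1,3,4,7} then 5/28 else if i \<in> {2,5,6} then 2/21 else 3/7)) \<or>
    W = {0,1,3}"
proof (induction rule: mes_partial.induct)
  case mes_init then show ?case by simp
next
  case (mes_phase1 W x c)
  let ?N = "{1,2,3,4,5,6,7} :: nat set"
  let ?r = "\<lambda>d. mes_rho x (supporters ?N Ames d)"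
  have cC: "c \<in> {0,1,2,3}" "c \<notin> W" using mes_phase1(2) by auto
  have fW: "finite W" using mes_sub[OF mes_phase1(1)] finite_subset by auto
  have cW: "card W \<le> 3" using mes_phase1.prems fW cC by simp
  have aff: "mes_affordable ?N Ames x c" by fact
  have mn: "\<And>d. d \<in> {0,1,2,3} - W \<Longrightarrow> mes_affordable ?N Ames x d \<Longrightarrow> ?r c \<le> ?r d"
    using mes_phase1(4) by blast
  from mes_phase1.IH[OF cW] consider (a) "W = {}" "x = (\<lambda>_. 3/7)"
    | (b) "W = {0}" "x = (\<lambda>i. if i \<in> {1,3,4,7} then 5/28 else 3/7)"
    | (c) "W = {0,1}" "x = (\<lambda>i. if i \<in> {1,3,4,7} then 5/28 else if i \<in> {2,5,6} then 2/21 else 3/7)"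
    | (d) "W = {0,1,3}" by blast
  then show ?case
  proof cases
    case a
    have r0: "?r 0 = 1/4"
    proof -
      have sp: "supporters ?N Ames 0 = {1,3,4,7}" by (auto simp: Ames_def)
      show ?thesis unfolding sp a(2) by (rule rho_eq) auto
    qed
    have r1: "?r 1 = 1/3"
    proof -
      have sp: "supporters ?N Ames 1 = {2,5,6}" by (auto simp: Ames_def)
      show ?thesis unfolding sp a(2) by (rule rho_eq) auto
    qed
    have r2: "?r 2 = 1/3"
    proof -
      have sp: "supporters ?N Ames 2 = {2,3,6}" by (auto simp: Ames_def)
      show ?thesis unfolding sp a(2) by (rule rho_eq) auto
    qed
    have r3: "?r 3 = 1/3"
    proof -
      have sp: "supporters ?N Ames 3 = {1,4,5}" by (auto simp: Ames_def)
      show ?thesis unfolding sp a(2) by (rule rho_eq) auto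
    qed
    have a0: "mes_affordable ?N Ames x 0" using a by (simp add: mes_affordable_def Ames_def)
    have "?r c \<le> ?r 0" using mn[of 0] a0 a by simp
    then have c0: "c = 0" using cC r0 r1 r2 r3 by auto
    have "(\<lambda>i. if i \<in> supporters ?N Ames c then x i - min (?r c) (x i) else x i) =
        (\<lambda>i. if i \<in> {1,3,4,7} then 5/28 else 3/7)"
      unfolding c0 r0 using a by (auto simp: Ames_def intro!: ext)
    then show ?thesis using a c0 by auto
  next
    case b
    have r1: "?r 1 = 1/3"
    proof -
      have sp: "supporters ?N Ames 1 = {2,5,6}" by (auto simp: Ames_def)
      show ?thesis unfolding sp b(2) by (rule rho_eq) auto
    qed
    have r2: "?r 2 = 23/56"
    proof -
      have sp: "supporters ?N Ames 2 = {2,3,6}" by (auto simp: Ames_def)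
      show ?thesis unfolding sp b(2) by (rule rho_eq) auto
    qed
    have n3: "\<not> mes_affordable ?N Ames x 3" using b by (simp add: mes_affordable_def Ames_def)
    have a1: "mes_affordable ?N Ames x 1" using b by (simp add: mes_affordable_def Ames_def)
    have "?r c \<le> ?r 1" using mn[of 1] a1 b by simp
    then have c1: "c = 1" using cC aff n3 r1 r2 b by auto
    have "(\<lambda>i. if i \<in> supporters ?N Ames c then x i - min (?r c) (x i) else x i) =
        (\<lambda>i. if i \<in> {1,3,4,7} then 5/28 else if i \<in> {2,5,6} then 2/21 else 3/7)"
      unfolding c1 r1 using b by (auto simp: Ames_def intro!: ext)
    then show ?thesis using b c1 by auto
  next
    case c
    have "\<not> mes_affordable ?N Ames x 2" "\<not> mes_affordable ?N Ames x 3"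
      using c by (simp_all add: mes_affordable_def Ames_def)
    then show ?thesis using cC aff c by auto
  next
    case d
    then show ?thesis using mes_phase1.prems cC by simp
  qed
next
  case (mes_switch W x)
  let ?N = "{1,2,3,4,5,6,7} :: nat set"
  have nA: "\<And>d. d \<in> {0,1,2,3} - W \<Longrightarrow> \<not> mes_affordable ?N Ames x d" using mes_switch(2) by blast
  from mes_switch.IH[OF mes_switch.prems] show ?case
  proof (elim disjE)
    assume a: "W = {} \<and> x = (\<lambda>_. 3/7) \<and> \<not> False"
    have "mes_affordable ?N Ames x 0" using a by (simp add: mes_affordable_def Ames_def)
    then show ?thesis using nA[of 0] a by simp
  next
    assume a: "W = {0} \<and> x = (\<lambda>i. if i \<in> {1,3,4,7} then 5/28 else 3/7) \<and> \<not> False"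
    have "mes_affordable ?N Ames x 1" using a by (simp add: mes_affordable_def Ames_def)
    then show ?thesis using nA[of 1] a by simp
  qed auto
next
  case (mes_phase2 W x c)
  let ?N = "{1,2,3,4,5,6,7} :: nat set"
  have cC: "c \<in> {0,1,2,3}" "c \<notin> W" using mes_phase2(2) by auto
  have fW: "finite W" using mes_sub[OF mes_phase2(1)] finite_subset by auto
  have cW: "card W \<le> 3" using mes_phase2.prems fW cC by simp
  have mn: "\<And>d. d \<in> {0,1,2,3} - W \<Longrightarrow> supporters ?N Ames d \<noteq> {} \<Longrightarrow> mes_time ?N Ames x c \<le> mes_time ?N Ames x d"
    using mes_phase2(4) by blast
  from mes_phase2.IH[OF cW] consider
      (c) "W = {0,1}" "x = (\<lambda>i. if i \<in> {1,3,4,7} then 5/28 else if i \<in> {2,5,6} then 2/21 else 3/7)"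
    | (d) "W = {0,1,3}" by auto
  then show ?case
  proof cases
    case c
    have "mes_time ?N Ames x c \<le> mes_time ?N Ames x 3" using mn[of 3] c by (simp add: Ames_def)
    then have "c = 3" using cC c by (auto simp: mes_time_def Ames_def)
    then show ?thesis using c by auto
  next
    case d
    then show ?thesis using mes_phase2.prems cC by simp
  qed
qed


lemma rho_sp: "supporters N A d = S \<Longrightarrow> finite S \<Longrightarrow> 0 \<le> r \<Longrightarrow> (\<Sum>i\<in>S. min r (x i)) = 1 \<Longrightarrow>
  \<exists>i\<in>S. r \<le> x i \<Longrightarrow> mes_rho x (supporters N A d) = r"
  using rho_eq by metis

lemma mes1':
  assumes "mes_partial C N A k W x False" "c \<in> C - W" "mes_affordable N A x c"
    "\<forall>d\<in>C - W. mes_affordable N A x d \<longrightarrow> mes_rho x (supporters N A c) \<le> mes_rho x (supporters N A d)"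
    "\<And>i. x' i = (if i \<in> supporters N A c then x i - min (mes_rho x (supporters N A c)) (x i) else x i)"
  shows "mes_partial C N A k (insert c W) x' False"
proof -
  have "x' = (\<lambda>i. if i \<in> supporters N A c then x i - min (mes_rho x (supporters N A c)) (x i) else x i)"
    using assms(5) by auto
  then show ?thesis using mes_phase1[OF assms(1-4)] by simp
qed

lemma mes2':
  assumes "mes_partial C N A k W x True" "c \<in> C - W" "supporters N A c \<noteq> {}"
    "\<forall>d\<in>C - W. supporters N A d \<noteq> {} \<longrightarrow> mes_time N A x c \<le> mes_time N A x d"
    "\<And>i. x' i = (if i \<in> supporters N A c then 0 else x i + mes_time N A x c)"
  shows "mes_partial C N A k (insert c W) x' True"
proof -
  have "x' = (\<lambda>i. if i \<in> supporters N A c then 0 else x i + mes_time N A x c)"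
    using assms(5) by auto
  then show ?thesis using mes_phase2[OF assms(1-4)] by simp
qed

lemma mes_chainX: "\<exists>x b. mes_partial {0,1,2,3} {1,2,3,4,5,6,7} Ames 3 {3,1,0} x b"
proof -
  let ?C = "{0,1,2,3} :: nat set" and ?N = "{1,2,3,4,5,6,7} :: nat set"
  let ?x0 = "(\<lambda>_. 3/7) :: nat \<Rightarrow> real"
  let ?x1 = "(\<lambda>i. if i \<in> {1,3,4,7} then 5/28 else 3/7) :: nat \<Rightarrow> real"
  let ?x2 = "(\<lambda>i. if i \<in> {1,3,4,7} then 5/28 else if i \<in> {2,5,6} then 2/21 else 3/7) :: nat \<Rightarrow> real"
  have s0: "mes_partial ?C ?N Ames 3 {} ?x0 False" using mes_init[of ?C ?N Ames 3] by simp
  have r00: "mes_rho ?x0 (supporters ?N Ames 0) = 1/4" by (rule rho_sp[where S="{1,3,4,7}"]) (auto simp: Ames_def)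
  have r01: "mes_rho ?x0 (supporters ?N Ames 1) = 1/3" by (rule rho_sp[where S="{2,5,6}"]) (auto simp: Ames_def)
  have r02: "mes_rho ?x0 (supporters ?N Ames 2) = 1/3" by (rule rho_sp[where S="{2,3,6}"]) (auto simp: Ames_def)
  have r03: "mes_rho ?x0 (supporters ?N Ames 3) = 1/3" by (rule rho_sp[where S="{1,4,5}"]) (auto simp: Ames_def)
  have s1: "mes_partial ?C ?N Ames 3 {0} ?x1 False"
  proof (rule mes1'[OF s0])
    show "\<forall>d\<in>?C - {}. mes_affordable ?N Ames ?x0 d \<longrightarrow> mes_rho ?x0 (supporters ?N Ames 0) \<le> mes_rho ?x0 (supporters ?N Ames d)"
      using r00 r01 r02 r03 by auto
    show "?x1 i = (if i \<in> supporters ?N Ames 0 then ?x0 i - min (mes_rho ?x0 (supporters ?N Ames 0)) (?x0 i) else ?x0 i)" for i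
      unfolding r00 by (auto simp: Ames_def)
  qed (auto simp: mes_affordable_def Ames_def)
  have r11: "mes_rho ?x1 (supporters ?N Ames 1) = 1/3" by (rule rho_sp[where S="{2,5,6}"]) (auto simp: Ames_def)
  have r12: "mes_rho ?x1 (supporters ?N Ames 2) = 23/56" by (rule rho_sp[where S="{2,3,6}"]) (auto simp: Ames_def)
  have n13: "\<not> mes_affordable ?N Ames ?x1 3" by (simp add: mes_affordable_def Ames_def)
  have s2: "mes_partial ?C ?N Ames 3 {1,0} ?x2 False"
  proof (rule mes1'[OF s1])
    show "\<forall>d\<in>?C - {0}. mes_affordable ?N Ames ?x1 d \<longrightarrow> mes_rho ?x1 (supporters ?N Ames 1) \<le> mes_rho ?x1 (supporters ?N Ames d)"
      using r11 r12 n13 by auto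
    show "?x2 i = (if i \<in> supporters ?N Ames 1 then ?x1 i - min (mes_rho ?x1 (supporters ?N Ames 1)) (?x1 i) else ?x1 i)" for i
      unfolding r11 by (auto simp: Ames_def)
  qed (auto simp: mes_affordable_def Ames_def)
  have s2': "mes_partial ?C ?N Ames 3 {1,0} ?x2 True"
    by (rule mes_switch[OF s2]) (auto simp: mes_affordable_def Ames_def)
  have s3: "mes_partial ?C ?N Ames 3 {3,1,0} (\<lambda>i. if i \<in> supporters ?N Ames 3 then 0 else ?x2 i + mes_time ?N Ames ?x2 3) True"
    by (rule mes_phase2[OF s2']) (auto simp: mes_time_def Ames_def)
  then show ?thesis by blast
qed


lemma mes_chainY: "\<exists>x b. mes_partial {0,1,2,3} {0,1,2,3,4,5,6,7} Ames 3 {0,2,3} x b"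
proof -
  let ?C = "{0,1,2,3} :: nat set" and ?N = "{0,1,2,3,4,5,6,7} :: nat set"
  let ?x0 = "(\<lambda>_. 3/8) :: nat \<Rightarrow> real"
  let ?x1 = "(\<lambda>i. if i \<in> {0,1,4,5} then 1/8 else 3/8) :: nat \<Rightarrow> real"
  let ?x2 = "(\<lambda>i. if i \<in> {2,3,6} then 1/24 else if i \<in> {0,1,4,5} then 1/8 else 3/8) :: nat \<Rightarrow> real"
  have s0: "mes_partial ?C ?N Ames 3 {} ?x0 False" using mes_init[of ?C ?N Ames 3] by simp
  have r00: "mes_rho ?x0 (supporters ?N Ames 0) = 1/4" by (rule rho_sp[where S="{1,3,4,7}"]) (auto simp: Ames_def)
  have r01: "mes_rho ?x0 (supporters ?N Ames 1) = 1/4" by (rule rho_sp[where S="{0,2,5,6}"]) (auto simp: Ames_def)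
  have r02: "mes_rho ?x0 (supporters ?N Ames 2) = 1/3" by (rule rho_sp[where S="{2,3,6}"]) (auto simp: Ames_def)
  have r03: "mes_rho ?x0 (supporters ?N Ames 3) = 1/4" by (rule rho_sp[where S="{0,1,4,5}"]) (auto simp: Ames_def)
  have s1: "mes_partial ?C ?N Ames 3 {3} ?x1 False"
  proof (rule mes1'[OF s0])
    show "\<forall>d\<in>?C - {}. mes_affordable ?N Ames ?x0 d \<longrightarrow> mes_rho ?x0 (supporters ?N Ames 3) \<le> mes_rho ?x0 (supporters ?N Ames d)"
      using r00 r01 r02 r03 by auto
    show "?x1 i = (if i \<in> supporters ?N Ames 3 then ?x0 i - min (mes_rho ?x0 (supporters ?N Ames 3)) (?x0 i) else ?x0 i)" for i
      unfolding r03 by (auto simp: Ames_def)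
  qed (auto simp: mes_affordable_def Ames_def)
  have r10: "mes_rho ?x1 (supporters ?N Ames 0) = 3/8" by (rule rho_sp[where S="{1,3,4,7}"]) (auto simp: Ames_def)
  have r11: "mes_rho ?x1 (supporters ?N Ames 1) = 3/8" by (rule rho_sp[where S="{0,2,5,6}"]) (auto simp: Ames_def)
  have r12: "mes_rho ?x1 (supporters ?N Ames 2) = 1/3" by (rule rho_sp[where S="{2,3,6}"]) (auto simp: Ames_def)
  have s2: "mes_partial ?C ?N Ames 3 {2,3} ?x2 False"
  proof (rule mes1'[OF s1])
    show "\<forall>d\<in>?C - {3}. mes_affordable ?N Ames ?x1 d \<longrightarrow> mes_rho ?x1 (supporters ?N Ames 2) \<le> mes_rho ?x1 (supporters ?N Ames d)"
    proof (intro ballI impI)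
      fix d assume "d \<in> ?C - {3}"
      then have "d = 0 \<or> d = 1 \<or> d = 2" by auto
      then show "mes_rho ?x1 (supporters ?N Ames 2) \<le> mes_rho ?x1 (supporters ?N Ames d)"
        by (elim disjE; hypsubst; simp only: r10 r11 r12; simp)
    qed
    show "?x2 i = (if i \<in> supporters ?N Ames 2 then ?x1 i - min (mes_rho ?x1 (supporters ?N Ames 2)) (?x1 i) else ?x1 i)" for i
      unfolding r12 by (auto simp: Ames_def)
    show "2 \<in> ?C - {3}" by simp
    show "mes_affordable ?N Ames ?x1 2" by (simp add: mes_affordable_def Ames_def)
  qed
  have s2': "mes_partial ?C ?N Ames 3 {2,3} ?x2 True"
    by (rule mes_switch[OF s2]) (auto simp: mes_affordable_def Ames_def)
  have s3: "mes_partial ?C ?N Ames 3 {0,2,3} (\<lambda>i. if i \<in> supporters ?N Ames 0 then 0 else ?x2 i + mes_time ?N Ames ?x2 0) True"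
    by (rule mes_phase2[OF s2']) (auto simp: mes_time_def Ames_def)
  then show ?thesis by blast
qed

lemma mes_fail: "fails_participation (equal_shares :: nat set \<Rightarrow> nat set \<Rightarrow> (nat \<Rightarrow> nat set) \<Rightarrow> nat \<Rightarrow> nat set set)"
proof -
  let ?C = "{0,1,2,3} :: nat set" and ?N = "{0,1,2,3,4,5,6,7} :: nat set" and ?B = "{1,3} :: nat set"
  have h1: "finite ?C" by simp
  have h2: "1 < card ?C" by simp
  have h3: "1 \<le> (3::nat)" by simp
  have h4: "3 < card ?C" by simp
  have h5: "is_profile ?C ?N Ames" unfolding is_profile_def by (auto simp: Ames_def)
  have h6: "2 \<le> card ?N" by simp
  have h7: "(0::nat) \<in> ?N" by simp
  have NN: "?N - {0} = {1,2,3,4,5,6,7}" by auto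
  have B: "Ames 0 = ?B" by (simp add: Ames_def)
  have X: "W = {0,1,3}" if Wm: "W \<in> equal_shares ?C (?N - {0}) Ames 3" for W
  proof -
    obtain x b where tW: "mes_partial ?C {1,2,3,4,5,6,7} Ames 3 W x b" and cW: "card W = 3"
      using Wm unfolding equal_shares_def NN mem_Collect_eq by blast
    show ?thesis using mes_inv[OF tW] cW by auto
  qed
  have h8: "kelly_strict (Ames 0) (equal_shares ?C (?N - {0}) Ames 3) (equal_shares ?C ?N Ames 3)"
    unfolding kelly_strict_def B
  proof (intro conjI ballI)
    fix W W' assume W: "W \<in> equal_shares ?C (?N - {0}) Ames 3"
    have "W \<inter> ?B = ?B" using X[OF W] by auto
    moreover have "card (W' \<inter> ?B) \<le> card ?B" by (rule card_mono) auto
    ultimately show "card (W' \<inter> ?B) \<le> card (W \<inter> ?B)" by simp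
  next
    have inX: "{3,1,0} \<in> equal_shares ?C (?N - {0}) Ames 3"
      unfolding equal_shares_def NN using mes_chainX by simp
    have inY: "{0,2,3} \<in> equal_shares ?C ?N Ames 3"
      unfolding equal_shares_def using mes_chainY by simp
    show "\<exists>W\<in>equal_shares ?C (?N - {0}) Ames 3. \<exists>W'\<in>equal_shares ?C ?N Ames 3.
        card (W' \<inter> ?B) < card (W \<inter> ?B)"
      apply (rule bexI[OF _ inX], rule bexI[OF _ inY]) by simp
  qed
  show ?thesis unfolding fails_participation_def
    apply (rule exI)+
    by (rule conjI[OF h1], rule conjI[OF h2], rule conjI[OF h3], rule conjI[OF h4],
        rule conjI[OF h5], rule conjI[OF h6], rule conjI[OF h7], rule h8)
qed


theorem corollary1:
  shows "(\<forall>s :: nat \<Rightarrow> rat.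
            s 0 = 0 \<and> 0 < s 1 \<and> mono s \<and>
            (\<forall>x. s (x + 2) - s (x + 1) \<le> s (x + 1) - s x) \<and>
            \<not> (\<exists>\<alpha>. \<forall>x. s x = \<alpha> * of_nat x)
            \<longrightarrow> fails_participation
                  (seq_thiele s :: nat set \<Rightarrow> nat set \<Rightarrow> (nat \<Rightarrow> nat set) \<Rightarrow> nat \<Rightarrow> nat set set))
       \<and> fails_participation
           (seq_phragmen :: nat set \<Rightarrow> nat set \<Rightarrow> (nat \<Rightarrow> nat set) \<Rightarrow> nat \<Rightarrow> nat set set)
       \<and> fails_participation
           (equal_shares :: nat set \<Rightarrow> nat set \<Rightarrow> (nat \<Rightarrow> nat set) \<Rightarrow> nat \<Rightarrow> nat set set)"
  using thiele_part phrag_fail mes_fail by blast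

end
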